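(* The estimate of Theorem 4.7 fails for $\epsilon=\frac13$: there is no constant $C>0$ such that for all $f\in L^{4/3}(\mathbb{H},(1-\log|z_2|)^{1/3})$ for which the integral defining $P(f)$ converges absolutely, and all $\lambda>0$, $$\left|\{(z_1,z_2)\in\mathbb{H} : |P(f)(z_1,z_2)|>\lambda\}\right| \le \frac{C\,\|f\|^{4/3}_{L^{4/3}(\mathbb{H},(1-\log|z_2|)^{1/3})}}{\lambda^{4/3}}.$$
   Context: $\mathbb{H}=\{(z_1,z_2)\in\mathbb{C}^2:|z_1|<|z_2|<1\}$, $dV$ Lebesgue measure, $|U|$ Lebesgue measure of $U$. The Bergman projection is $P(f)(z)=\int_{\mathbb{H}}K_{\mathbb{H}}(z;\bar w)f(w)\,dV(w)$, $K_{\mathbb{H}}(z_1,z_2;\bar w_1,\bar w_2)=\frac{1}{\pi^2 z_2\bar w_2(1-\frac{z_1\bar w_1}{z_2\bar w_2})^2(1-z_2\bar w_2)^2}$. For a positive weight $\mu$, $\|f\|^p_{L^p(\mathbb{H},\mu)}=\int_{\mathbb{H}}|f|^p\mu\,dV$. *)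

theory Defs
  imports "HOL-Analysis.Analysis"
begin

definition hartogs :: "(complex \<times> complex) set" where
  "hartogs = {(z1, z2). norm z1 < norm z2 \<and> norm z2 < 1}"

definition bergman_kernel :: "complex \<times> complex \<Rightarrow> complex \<times> complex \<Rightarrow> complex" where
  "bergman_kernel z w =
     1 / (complex_of_real (pi ^ 2) * snd z * cnj (snd w)
          * (1 - (fst z * cnj (fst w)) / (snd z * cnj (snd w))) ^ 2
          * (1 - snd z * cnj (snd w)) ^ 2)"

definition bergman_proj :: "(complex \<times> complex \<Rightarrow> complex) \<Rightarrow> complex \<times> complex \<Rightarrow> complex" where
  "bergman_proj f z = (LINT w:hartogs|lebesgue. bergman_kernel z w * f w)"

definition hweight :: "complex \<times> complex \<Rightarrow> real" where
  "hweight z = (1 - ln (norm (snd z))) powr (1/3)"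

definition wLp_pow :: "real \<Rightarrow> (complex \<times> complex \<Rightarrow> real) \<Rightarrow> (complex \<times> complex \<Rightarrow> complex) \<Rightarrow> ennreal" where
  "wLp_pow p \<mu> f = (\<integral>\<^sup>+ z \<in> hartogs. ennreal (norm (f z) powr p * \<mu> z) \<partial>lebesgue)"

end

theory Submission
  imports Defs
begin

definition rho :: "nat \<Rightarrow> real" where "rho n = 1 / 2 ^ (n + 4)"
definition Bset :: "nat \<Rightarrow> (complex \<times> complex) set" where
  "Bset n = ball 0 (rho n) \<times> (ball 0 (2 * rho n) - cball 0 (rho n))"
definition acoef :: "nat \<Rightarrow> real" where "acoef n = 1 / (real n * rho n ^ 4)"
definition fJ :: "nat \<Rightarrow> complex \<times> complex \<Rightarrow> complex" where
  "fJ J w = (\<Sum>n\<in>{1..J}. indicator (Bset n) w *\<^sub>R (complex_of_real (acoef n) * cnj (snd w)))"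

lemma cnj_meas[measurable]: "cnj \<in> borel_measurable borel"
  by (intro borel_measurable_continuous_onI continuous_intros)

lemma hartogs_eq: "hartogs = {z. norm (fst z) < norm (snd z) \<and> norm (snd z) < 1}"
  unfolding hartogs_def by auto

lemma hartogs_borel[measurable]: "hartogs \<in> sets borel"
proof -
  have "open hartogs" unfolding hartogs_eq
    by (intro open_Collect_conj open_Collect_less) (auto intro!: continuous_intros)
  thus ?thesis by simp
qed

lemma Bset_borel[measurable]: "Bset n \<in> sets borel"
  unfolding Bset_def by (simp add: borel_prod[symmetric])

lemma kernel_meas[measurable]: "case_prod bergman_kernel \<in> borel_measurable borel"
  unfolding bergman_kernel_def case_prod_unfold borel_prod[symmetric] by measurable

lemma cnj_snd_meas[measurable]: "(\<lambda>w::complex\<times>complex. cnj (snd w)) \<in> borel_measurable borel"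
  by (intro borel_measurable_continuous_onI continuous_intros)

lemma fJ_meas[measurable]: "fJ J \<in> borel_measurable borel"
  unfolding fJ_def by measurable


lemma rho_pos: "rho n > 0" by (simp add: rho_def)
lemma rho_le: "rho n \<le> 1/16"
proof -
  have "(16::real) \<le> 2^(n+4)" using power_increasing[of 4 "n+4" "2::real"] by simp
  thus ?thesis by (simp add: rho_def field_simps)
qed
lemma rho_mono: "m < n \<Longrightarrow> 2 * rho n \<le> rho m"
proof -
  assume "m < n"
  have "(2::real)*2^(m+4) = 2^(m+5)" by (simp add: power_add)
  also have "\<dots> \<le> 2^(n+4)" by (rule power_increasing) (use \<open>m<n\<close> in auto)
  finally have "(2::real)*2^(m+4) \<le> 2^(n+4)" .
  thus ?thesis by (simp add: rho_def field_simps)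
qed

lemma Bset_iff: "w \<in> Bset n \<longleftrightarrow> norm (fst w) < rho n \<and> rho n < norm (snd w) \<and> norm (snd w) < 2 * rho n"
  unfolding Bset_def by (cases w) auto

lemma Bset_hartogs: "Bset n \<subseteq> hartogs"
  using rho_le[of n] unfolding Bset_iff hartogs_eq by (auto simp: Bset_iff)

lemma Bset_disj: "n \<noteq> m \<Longrightarrow> w \<in> Bset n \<Longrightarrow> w \<notin> Bset m"
proof -
  assume nm: "n \<noteq> m" and w: "w \<in> Bset n"
  show "w \<notin> Bset m"
  proof
    assume wm: "w \<in> Bset m"
    show False
    proof (cases "m < n")
      case True thus False using rho_mono[OF True] w wm by (auto simp: Bset_iff)
    next
      case False hence "n < m" using nm by auto
      thus False using rho_mono[of n m] w wm by (auto simp: Bset_iff)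
    qed
  qed
qed

lemma Bset_uniq: "w \<in> Bset n \<Longrightarrow> w \<in> Bset m \<Longrightarrow> m = n"
  using Bset_disj by blast

lemma fJ_in: "n \<in> {1..J} \<Longrightarrow> w \<in> Bset n \<Longrightarrow> fJ J w = complex_of_real (acoef n) * cnj (snd w)"
  unfolding fJ_def
  by (subst sum.remove[of _ n]) (auto intro!: sum.neutral simp: indicator_def dest: Bset_uniq)

lemma fJ_out: "(\<And>n. n \<in> {1..J} \<Longrightarrow> w \<notin> Bset n) \<Longrightarrow> fJ J w = 0"
  unfolding fJ_def by (auto intro!: sum.neutral simp: indicator_def)

lemma emeasure_ball_c: "r \<ge> 0 \<Longrightarrow> emeasure lborel (ball (c::complex) r) = ennreal (pi * r^2)"
  by (simp add: emeasure_ball unit_ball_vol_2)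
lemma emeasure_cball_c: "r \<ge> 0 \<Longrightarrow> emeasure lborel (cball (c::complex) r) = ennreal (pi * r^2)"
  by (simp add: emeasure_cball unit_ball_vol_2)

lemma emeasure_Times_c: "A \<in> sets borel \<Longrightarrow> B \<in> sets borel \<Longrightarrow>
   emeasure lborel (A \<times> (B::complex set)) = emeasure lborel (A::complex set) * emeasure lborel B"
  by (simp add: lborel_prod[symmetric] lborel.emeasure_pair_measure_Times)

lemma emeasure_annulus: "0 \<le> r \<Longrightarrow> r < s \<Longrightarrow>
   emeasure lborel (ball (0::complex) s - cball 0 r) = ennreal (pi * (s^2 - r^2))"
proof -
  assume r: "0 \<le> r" "r < s"
  have "emeasure lborel (ball (0::complex) s - cball 0 r) = emeasure lborel (ball (0::complex) s) - emeasure lborel (cball (0::complex) r)"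
  proof (rule emeasure_Diff)
    show "emeasure lborel (cball (0::complex) r) \<noteq> \<infinity>" using emeasure_lborel_cball_finite[of "0::complex" r] by auto
    show "cball (0::complex) r \<subseteq> ball 0 s" using r by auto
  qed auto
  also have "\<dots> = ennreal (pi * (s^2 - r^2))"
    using r by (simp add: emeasure_ball_c emeasure_cball_c ennreal_minus[symmetric] power_mono algebra_simps)
  finally show ?thesis .
qed

lemma emeasure_Bset: "emeasure lborel (Bset n) = ennreal (3 * pi^2 * rho n ^ 4)"
proof -
  have r: "rho n > 0" by (rule rho_pos)
  have "emeasure lborel (Bset n) = ennreal (pi * rho n ^ 2) * ennreal (pi * ((2 * rho n)^2 - rho n ^ 2))"
    unfolding Bset_def using r
    by (subst emeasure_Times_c) (auto simp: emeasure_ball_c emeasure_annulus)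
  also have "\<dots> = ennreal (3 * pi^2 * rho n ^ 4)"
    using r by (subst ennreal_mult[symmetric]) (auto simp: power2_eq_square power4_eq_xxxx algebra_simps)
  finally show ?thesis .
qed

lemma measure_Bset: "measure lborel (Bset n) = 3 * pi^2 * rho n ^ 4"
  by (simp add: measure_def emeasure_Bset)


lemma re_inv_bound: fixes u :: complex assumes "norm (u - 1/2) \<le> 1/4" shows "Re (1/u) \<ge> 4/9"
proof -
  have r1: "\<bar>Re u - 1/2\<bar> \<le> 1/4" using abs_Re_le_cmod[of "u - 1/2"] assms by simp
  have n: "norm u \<le> 3/4" using norm_triangle_ineq[of "u - 1/2" "1/2"] assms by simp
  have "(norm u)^2 \<le> (3/4)^2" using n by (intro power_mono) auto
  hence s: "(Re u)^2 + (Im u)^2 \<le> 9/16" by (simp add: cmod_power2 power_divide)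
  have r2: "1/4 \<le> Re u" using abs_le_D2[OF r1] by linarith
  have "Re u > 0" using r2 by linarith
  hence pos: "(Re u)^2 + (Im u)^2 > 0" by (simp add: add_pos_nonneg)
  have "Re (1/u) = Re u / ((Re u)^2 + (Im u)^2)" by (simp add: Re_divide power2_eq_square)
  also have "\<dots> \<ge> (1/4) / (9/16)"
    using r2 s pos by (intro frac_le) auto
  finally show ?thesis by simp
qed

lemma u_bound:
  fixes z2 \<zeta> v :: complex
  assumes "norm \<zeta> \<le> 1/49" "norm v \<le> 1/15" "norm (z2 - 1/2) \<le> 1/100"
  shows "norm (z2 * (1 - \<zeta>)^2 * (1 - v)^2 - 1/2) \<le> 1/4"
proof -
  define p where "p = (1 - \<zeta>) * (1 - v)"
  have "p - 1 = - \<zeta> - v + \<zeta> * v" by (simp add: p_def algebra_simps)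
  hence "norm (p - 1) \<le> norm \<zeta> + norm v + norm \<zeta> * norm v"
    by (metis (no_types, lifting) norm_minus_cancel norm_mult norm_triangle_ineq4 norm_triangle_le add_mono order_refl
        norm_triangle_ineq diff_conv_add_uminus)
  also have "\<dots> \<le> 1/49 + 1/15 + 1/49 * (1/15)" using assms by (intro add_mono mult_mono) auto
  finally have p1: "norm (p - 1) \<le> 1/10" by simp
  have p2: "norm (p + 1) \<le> 21/10" using norm_triangle_ineq[of "p - 1" 2] p1 by (simp add: add.commute)
  have "norm (p^2 - 1) = norm (p - 1) * norm (p + 1)"
    by (simp add: power2_eq_square algebra_simps norm_mult[symmetric])
  also have "\<dots> \<le> 1/10 * (21/10)" using p1 p2 by (intro mult_mono) auto
  finally have p3: "norm (p^2 - 1) \<le> 21/100" by simp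
  have z: "norm z2 \<le> 51/100" using norm_triangle_ineq[of "z2 - 1/2" "1/2"] assms(3) by simp
  have "z2 * (1 - \<zeta>)^2 * (1 - v)^2 - 1/2 = (z2 - 1/2) + z2 * (p^2 - 1)"
    by (simp add: p_def power2_eq_square algebra_simps)
  hence "norm (z2 * (1 - \<zeta>)^2 * (1 - v)^2 - 1/2) \<le> norm (z2 - 1/2) + norm z2 * norm (p^2 - 1)"
    by (metis norm_mult norm_triangle_ineq)
  also have "\<dots> \<le> 1/100 + 51/100 * (21/100)" using assms(3) z p3 by (intro add_mono mult_mono) auto
  finally show ?thesis by simp
qed

lemma kernel_alt:
  assumes "snd w \<noteq> 0" "snd z \<noteq> 0"
  shows "bergman_kernel z w * cnj (snd w) =
    1 / (complex_of_real (pi^2) * (snd z * (1 - fst z * cnj (fst w) / (snd z * cnj (snd w)))^2 * (1 - snd z * cnj (snd w))^2))"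
  using assms unfolding bergman_kernel_def by (simp add: field_simps)


lemma kernel_re_bound:
  assumes z1: "norm (fst z) < 1/100" and z2: "norm (snd z - 1/2) < 1/100" and w: "w \<in> Bset n"
  shows "Re (bergman_kernel z w * cnj (snd w)) \<ge> 4/(9*pi^2)"
proof -
  have r: "rho n > 0" "rho n \<le> 1/16" by (rule rho_pos, rule rho_le)
  from w have w1: "norm (fst w) < rho n" and w2: "rho n < norm (snd w)" "norm (snd w) < 2 * rho n"
    by (auto simp: Bset_iff)
  have nz2l: "norm (snd z) \<ge> 49/100" using norm_triangle_ineq2[of "1/2" "snd z"] z2 by (simp add: norm_minus_commute)
  have nz2u: "norm (snd z) \<le> 51/100" using norm_triangle_ineq[of "snd z - 1/2" "1/2"] z2 by simp
  have sw: "snd w \<noteq> 0" using w2 r by auto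
  have sz: "snd z \<noteq> 0" using nz2l by auto
  define \<zeta> where "\<zeta> = fst z * cnj (fst w) / (snd z * cnj (snd w))"
  define v where "v = snd z * cnj (snd w)"
  have "norm \<zeta> = norm (fst z) * norm (fst w) / (norm (snd z) * norm (snd w))"
    by (simp add: \<zeta>_def norm_mult norm_divide)
  also have "\<dots> \<le> (1/100) * norm (snd w) / ((49/100) * norm (snd w))"
    using z1 w1 w2 nz2l r by (intro frac_le mult_mono mult_pos_pos) auto
  also have "\<dots> = 1/49" using sw by simp
  finally have hz: "norm \<zeta> \<le> 1/49" .
  have "norm v = norm (snd z) * norm (snd w)" by (simp add: v_def norm_mult)
  also have "\<dots> \<le> (51/100) * (1/8)" using nz2u w2 r by (intro mult_mono) auto
  finally have hv: "norm v \<le> 1/15" by simp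
  define u where "u = snd z * (1 - \<zeta>)^2 * (1 - v)^2"
  have hu: "norm (u - 1/2) \<le> 1/4" unfolding u_def using hz hv z2 by (intro u_bound) auto
  have eq1: "bergman_kernel z w * cnj (snd w) = (1 / u) / complex_of_real (pi^2)"
    using kernel_alt[OF sw sz] by (simp add: u_def \<zeta>_def v_def)
  have un: "u \<noteq> 0" using hu by auto
  have "Re (bergman_kernel z w * cnj (snd w)) = Re (1/u) / pi^2"
    unfolding eq1 by (rule Re_divide_of_real)
  also have "\<dots> \<ge> (4/9) / pi^2" using re_inv_bound[OF hu] by (intro divide_right_mono) auto
  finally show ?thesis by simp
qed

lemma kernel_norm_bound:
  assumes z: "z \<in> hartogs" and w: "w \<in> hartogs"
  shows "norm (bergman_kernel z w * cnj (snd w)) \<le>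
     1 / (pi^2 * (norm (snd z) * ((1 - norm (fst z) / norm (snd z))^2 * (1 - norm (snd z))^2)))"
proof -
  from z have z1: "norm (fst z) < norm (snd z)" and z2: "norm (snd z) < 1" by (auto simp: hartogs_eq)
  from w have w1: "norm (fst w) < norm (snd w)" and w2: "norm (snd w) < 1" by (auto simp: hartogs_eq)
  have sw: "snd w \<noteq> 0" using w1 by auto
  have sz: "snd z \<noteq> 0" using z1 by auto
  define \<zeta> where "\<zeta> = fst z * cnj (fst w) / (snd z * cnj (snd w))"
  define v where "v = snd z * cnj (snd w)"
  have "norm \<zeta> = (norm (fst z) / norm (snd z)) * (norm (fst w) / norm (snd w))"
    by (simp add: \<zeta>_def norm_mult norm_divide)
  also have "\<dots> \<le> (norm (fst z) / norm (snd z)) * 1"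
    using w1 by (intro mult_left_mono) (auto simp: divide_le_eq_1)
  finally have hz: "norm \<zeta> \<le> norm (fst z) / norm (snd z)" by simp
  have "norm v = norm (snd z) * norm (snd w)" by (simp add: v_def norm_mult)
  also have "\<dots> \<le> norm (snd z) * 1" using w2 by (intro mult_left_mono) auto
  finally have hv: "norm v \<le> norm (snd z)" by simp
  have a: "0 < 1 - norm (fst z) / norm (snd z)" using z1 sz by (simp add: field_simps)
  have b: "0 < 1 - norm (snd z)" using z2 by simp
  have X: "1 - norm (fst z) / norm (snd z) \<le> norm (1 - \<zeta>)"
    using norm_triangle_ineq2[of 1 \<zeta>] hz by simp
  have Y: "1 - norm (snd z) \<le> norm (1 - v)"
    using norm_triangle_ineq2[of 1 v] hv by simp
  have "bergman_kernel z w * cnj (snd w) = 1 / (complex_of_real (pi^2) * (snd z * (1 - \<zeta>)^2 * (1 - v)^2))"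
    using kernel_alt[OF sw sz] by (simp add: \<zeta>_def v_def)
  hence "norm (bergman_kernel z w * cnj (snd w)) = 1 / (pi^2 * (norm (snd z) * (norm (1 - \<zeta>)^2 * norm (1 - v)^2)))"
    by (simp add: norm_mult norm_divide norm_power)
  also have "\<dots> \<le> 1 / (pi^2 * (norm (snd z) * ((1 - norm (fst z) / norm (snd z))^2 * (1 - norm (snd z))^2)))"
    using a b X Y sz
    by (intro divide_left_mono mult_left_mono mult_mono power_mono mult_pos_pos) auto
  finally show ?thesis .
qed


definition gterm :: "complex \<times> complex \<Rightarrow> nat \<Rightarrow> complex \<times> complex \<Rightarrow> complex" where
  "gterm z n w = indicator (Bset n) w *\<^sub>R (complex_of_real (acoef n) * (bergman_kernel z w * cnj (snd w)))"

lemma kernel_meas_z[measurable]: "(\<lambda>w. bergman_kernel z w) \<in> borel_measurable borel"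
proof -
  have "(\<lambda>w. (z, w)) \<in> borel \<rightarrow>\<^sub>M borel"
    by (intro borel_measurable_continuous_onI continuous_intros)
  from measurable_compose[OF this kernel_meas] show ?thesis by simp
qed

lemma integrand_eq:
  "indicator hartogs w *\<^sub>R (bergman_kernel z w * fJ J w) = (\<Sum>n\<in>{1..J}. gterm z n w)"
proof (cases "w \<in> hartogs")
  case True thus ?thesis
    unfolding fJ_def gterm_def by (simp add: sum_distrib_left algebra_simps)
next
  case False
  hence "\<And>n. w \<notin> Bset n" using Bset_hartogs by blast
  thus ?thesis using False unfolding gterm_def by simp
qed

lemma acoef_pos: "n \<ge> 1 \<Longrightarrow> acoef n > 0"
  using rho_pos[of n] by (simp add: acoef_def)

lemma gterm_int:
  assumes z: "z \<in> hartogs"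
  shows "integrable lborel (gterm z n)"
  unfolding gterm_def
proof (rule integrableI_bounded_set_indicator)
  show "Bset n \<in> sets lborel" by simp
  show "(\<lambda>w. complex_of_real (acoef n) * (bergman_kernel z w * cnj (snd w))) \<in> borel_measurable lborel"
    by measurable
  show "emeasure lborel (Bset n) < \<infinity>" by (simp add: emeasure_Bset)
  show "AE w in lborel. w \<in> Bset n \<longrightarrow> norm (complex_of_real (acoef n) * (bergman_kernel z w * cnj (snd w))) \<le>
     \<bar>acoef n\<bar> * (1 / (pi^2 * (norm (snd z) * ((1 - norm (fst z) / norm (snd z))^2 * (1 - norm (snd z))^2))))"
  proof (intro AE_I2 impI)
    fix w assume "w \<in> Bset n"
    hence w: "w \<in> hartogs" using Bset_hartogs by blast
    show "norm (complex_of_real (acoef n) * (bergman_kernel z w * cnj (snd w))) \<le>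
     \<bar>acoef n\<bar> * (1 / (pi^2 * (norm (snd z) * ((1 - norm (fst z) / norm (snd z))^2 * (1 - norm (snd z))^2))))"
    proof -
      have "norm (complex_of_real (acoef n) * (bergman_kernel z w * cnj (snd w))) = \<bar>acoef n\<bar> * norm (bergman_kernel z w * cnj (snd w))"
        by (simp only: norm_mult norm_of_real)
      also have "\<dots> \<le> \<bar>acoef n\<bar> * (1 / (pi^2 * (norm (snd z) * ((1 - norm (fst z) / norm (snd z))^2 * (1 - norm (snd z))^2))))"
        by (intro mult_left_mono kernel_norm_bound[OF z w]) auto
      finally show ?thesis .
    qed
  qed
qed

lemma U_hartogs: "norm (fst z) < 1/100 \<Longrightarrow> norm (snd z - 1/2) < 1/100 \<Longrightarrow> z \<in> hartogs"
proof -
  assume z1: "norm (fst z) < 1/100" and z2: "norm (snd z - 1/2) < 1/100"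
  have nz2l: "norm (snd z) \<ge> 49/100" using norm_triangle_ineq2[of "1/2" "snd z"] z2 by (simp add: norm_minus_commute)
  have nz2u: "norm (snd z) \<le> 51/100" using norm_triangle_ineq[of "snd z - 1/2" "1/2"] z2 by simp
  show ?thesis using z1 nz2l nz2u by (simp add: hartogs_eq)
qed

lemma Re_integral_lower:
  assumes z1: "norm (fst z) < 1/100" and z2: "norm (snd z - 1/2) < 1/100"
  shows "Re (LINT w|lborel. indicator hartogs w *\<^sub>R (bergman_kernel z w * fJ J w)) \<ge> 4/3 * harm J"
proof -
  have z: "z \<in> hartogs" using U_hartogs[OF z1 z2] .
  have int: "\<And>n. integrable lborel (gterm z n)" using gterm_int[OF z] .
  have "(LINT w|lborel. indicator hartogs w *\<^sub>R (bergman_kernel z w * fJ J w)) =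
        (\<Sum>n\<in>{1..J}. LINT w|lborel. gterm z n w)"
    unfolding integrand_eq by (rule Bochner_Integration.integral_sum[where f="gterm z", OF int])
  hence "Re (LINT w|lborel. indicator hartogs w *\<^sub>R (bergman_kernel z w * fJ J w)) =
        (\<Sum>n\<in>{1..J}. LINT w|lborel. Re (gterm z n w))"
    using int by simp
  also have "\<dots> \<ge> (\<Sum>n\<in>{1..J}. LINT w|lborel. indicator (Bset n) w * (acoef n * (4/(9*pi^2))))"
  proof (rule sum_mono)
    fix n assume n: "n \<in> {1..J}"
    show "(LINT w|lborel. indicator (Bset n) w * (acoef n * (4/(9*pi^2)))) \<le> (LINT w|lborel. Re (gterm z n w))"
    proof (rule integral_mono)
      show "integrable lborel (\<lambda>w. indicator (Bset n) w * (acoef n * (4/(9*pi^2))))"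
        by (intro integrable_mult_left integrable_real_indicator) (auto simp: emeasure_Bset)
      show "integrable lborel (\<lambda>w. Re (gterm z n w))" using int by auto
      fix w
      show "indicator (Bset n) w * (acoef n * (4/(9*pi^2))) \<le> Re (gterm z n w)"
      proof (cases "w \<in> Bset n")
        case True
        have "acoef n * (4/(9*pi^2)) \<le> acoef n * Re (bergman_kernel z w * cnj (snd w))"
          using acoef_pos[of n] n kernel_re_bound[OF z1 z2 True] by (intro mult_left_mono) auto
        thus ?thesis using True by (simp add: gterm_def)
      qed (simp add: gterm_def)
    qed
  qed
  also have "(\<Sum>n\<in>{1..J}. LINT w|lborel. indicator (Bset n) w * (acoef n * (4/(9*pi^2)))) =
             (\<Sum>n\<in>{1..J}. 4/3 * inverse (real n))"
  proof (rule sum.cong[OF refl])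
    fix n assume n: "n \<in> {1..J}"
    have "(LINT w|lborel. indicator (Bset n) w * (acoef n * (4/(9*pi^2)))) = measure lborel (Bset n) * (acoef n * (4/(9*pi^2)))"
      by simp
    also have "\<dots> = 4/3 * inverse (real n)"
      using rho_pos[of n] n unfolding measure_Bset acoef_def by (simp add: field_simps)
    finally show "(LINT w|lborel. indicator (Bset n) w * (acoef n * (4/(9*pi^2)))) = 4/3 * inverse (real n)" .
  qed
  also have "\<dots> = 4/3 * harm J" by (simp add: harm_def sum_distrib_left)
  finally show ?thesis .
qed


lemma powr43: "(x::real) \<ge> 0 \<Longrightarrow> x powr (4/3) = x * x powr (1/3)"
proof (cases "x = 0")
  case False
  assume "x \<ge> 0"
  hence "x > 0" using False by auto
  have "x powr (4/3) = x powr (1 + 1/3)" by simp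
  also have "\<dots> = x powr 1 * x powr (1/3)" by (rule powr_add)
  finally show ?thesis using \<open>x > 0\<close> by simp
qed simp

lemma cube_root_powr: "(y::real) \<ge> 0 \<Longrightarrow> (y^3) powr (1/3) = y"
proof (cases "y = 0")
  case False
  assume "y \<ge> 0" hence y: "y > 0" using False by auto
  have "(y^3) powr (1/3) = (y powr 3) powr (1/3)" using y by (simp add: powr_numeral)
  also have "\<dots> = y powr (3 * (1/3))" by (rule powr_powr)
  also have "\<dots> = y" using y by simp
  finally show ?thesis .
qed simp

lemma pointwise_real_bound:
  assumes n: "n \<ge> 1" and w: "w \<in> Bset n"
  shows "norm (complex_of_real (acoef n) * cnj (snd w)) powr (4/3) * hweight w \<le> 6 / (real n * rho n ^ 4)"
proof -
  have r: "rho n > 0" by (rule rho_pos)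
  from w have w2: "rho n < norm (snd w)" "norm (snd w) < 2 * rho n" by (auto simp: Bset_iff)
  define x where "x = acoef n * norm (snd w)"
  define L where "L = 1 - ln (norm (snd w))"
  have a: "acoef n > 0" using acoef_pos n by auto
  have x0: "x \<ge> 0" using a by (simp add: x_def)
  have nx: "norm (complex_of_real (acoef n) * cnj (snd w)) = x"
    using a by (simp add: x_def norm_mult)
  have xb: "x \<le> 2 / (real n * rho n ^ 3)"
  proof -
    have "x \<le> acoef n * (2 * rho n)" unfolding x_def using a w2 by (intro mult_left_mono) auto
    also have "\<dots> = 2 / (real n * rho n ^ 3)" using r n by (simp add: acoef_def field_simps power4_eq_xxxx power3_eq_cube)
    finally show ?thesis .
  qed
  have lnr: "- ln (rho n) \<le> real n + 4"
  proof -
    have "ln (rho n) = - (real (n+4) * ln 2)" by (simp add: rho_def ln_div ln_realpow)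
    moreover have "ln (2::real) \<le> 1" using ln_le_minus_one[of 2] by simp
    hence "real (n+4) * ln 2 \<le> real (n+4) * 1" by (intro mult_left_mono) auto
    ultimately show ?thesis by simp
  qed
  have "norm (snd w) \<le> 1" using w2 rho_le[of n] by simp
  hence "ln (norm (snd w)) \<le> 0" using w2 r by (intro ln_le_zero_iff[THEN iffD2]) auto
  hence L1: "L \<ge> 1" unfolding L_def by simp
  have L2: "L \<le> 6 * real n"
  proof -
    have "ln (rho n) \<le> ln (norm (snd w))" using w2 r by (intro ln_mono) auto
    thus ?thesis unfolding L_def using lnr n by linarith
  qed
  have hw: "hweight w = L powr (1/3)" by (simp add: hweight_def L_def)
  have "norm (complex_of_real (acoef n) * cnj (snd w)) powr (4/3) * hweight w = x * (x powr (1/3) * L powr (1/3))"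
    unfolding nx hw powr43[OF x0] by simp
  also have "\<dots> = x * (x * L) powr (1/3)" using x0 L1 by (simp add: powr_mult)
  also have "\<dots> \<le> (2 / (real n * rho n ^ 3)) * (3 / rho n)"
  proof (rule mult_mono[OF xb])
    have "x * L \<le> (2 / (real n * rho n ^ 3)) * (6 * real n)" using xb L2 x0 L1 r by (intro mult_mono) auto
    also have "\<dots> = 12 / rho n ^ 3" using n by (simp add: field_simps)
    also have "\<dots> \<le> (3 / rho n)^3" using r by (simp add: power_divide divide_right_mono)
    finally have "(x * L) powr (1/3) \<le> ((3 / rho n)^3) powr (1/3)" using x0 L1 by (intro powr_mono2) auto
    thus "(x * L) powr (1/3) \<le> 3 / rho n" using r by (simp add: cube_root_powr)
  qed (use x0 r n in auto)
  also have "\<dots> = 6 / (real n * rho n ^ 4)" using r n by (simp add: field_simps power4_eq_xxxx power3_eq_cube)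
  finally show ?thesis .
qed


lemma norm_bound: "wLp_pow (4/3) hweight (fJ J) \<le> ennreal (18 * pi^2 * harm J)"
proof -
  have "wLp_pow (4/3) hweight (fJ J) =
     (\<integral>\<^sup>+ z. ennreal (norm (fJ J z) powr (4/3) * hweight z) * indicator hartogs z \<partial>lborel)"
    unfolding wLp_pow_def by (simp add: nn_integral_completion)
  also have "\<dots> \<le> (\<integral>\<^sup>+ z. (\<Sum>n\<in>{1..J}. ennreal (6 / (real n * rho n ^ 4)) * indicator (Bset n) z) \<partial>lborel)"
  proof (rule nn_integral_mono)
    fix z
    show "ennreal (norm (fJ J z) powr (4/3) * hweight z) * indicator hartogs z \<le>
          (\<Sum>n\<in>{1..J}. ennreal (6 / (real n * rho n ^ 4)) * indicator (Bset n) z)"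
    proof (cases "\<exists>m\<in>{1..J}. z \<in> Bset m")
      case True
      then obtain m where m: "m \<in> {1..J}" "z \<in> Bset m" by blast
      have "ennreal (norm (fJ J z) powr (4/3) * hweight z) * indicator hartogs z
          \<le> ennreal (norm (fJ J z) powr (4/3) * hweight z)"
        by (simp add: indicator_def)
      also have "\<dots> \<le> ennreal (6 / (real m * rho m ^ 4))"
        using pointwise_real_bound[of m z] m fJ_in[OF m] by (intro ennreal_leI) auto
      also have "\<dots> = ennreal (6 / (real m * rho m ^ 4)) * indicator (Bset m) z" using m by simp
      also have "\<dots> \<le> (\<Sum>n\<in>{1..J}. ennreal (6 / (real n * rho n ^ 4)) * indicator (Bset n) z)"
        by (rule member_le_sum[where f="\<lambda>n. ennreal (6 / (real n * rho n ^ 4)) * indicator (Bset n) z"]) (use m in auto)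
      finally show ?thesis .
    next
      case False
      hence "fJ J z = 0" by (intro fJ_out) auto
      thus ?thesis by simp
    qed
  qed
  also have "\<dots> = (\<Sum>n\<in>{1..J}. ennreal (6 / (real n * rho n ^ 4)) * emeasure lborel (Bset n))"
    by (subst nn_integral_sum) (auto simp: nn_integral_cmult_indicator)
  also have "\<dots> = (\<Sum>n\<in>{1..J}. ennreal (18 * pi^2 * inverse (real n)))"
  proof (rule sum.cong[OF refl])
    fix n assume n: "n \<in> {1..J}"
    have r: "rho n > 0" by (rule rho_pos)
    show "ennreal (6 / (real n * rho n ^ 4)) * emeasure lborel (Bset n) = ennreal (18 * pi^2 * inverse (real n))"
      unfolding emeasure_Bset using r n
      by (subst ennreal_mult[symmetric]) (auto simp: field_simps)
  qed
  also have "\<dots> = ennreal (18 * pi^2 * harm J)"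
    by (subst sum_ennreal) (auto simp: harm_def sum_distrib_left)
  finally show ?thesis .
qed


lemma proj_eq: "bergman_proj (fJ J) z = (LINT w|lborel. indicator hartogs w *\<^sub>R (bergman_kernel z w * fJ J w))"
  unfolding bergman_proj_def set_lebesgue_integral_def
  by (rule integral_completion) measurable

lemma proj_meas: "(\<lambda>z. bergman_proj (fJ J) z) \<in> borel_measurable lborel"
proof -
  have m: "(\<lambda>p. indicator hartogs (snd p) *\<^sub>R (bergman_kernel (fst p) (snd p) * fJ J (snd p)))
      \<in> borel_measurable (borel :: ((complex \<times> complex) \<times> (complex \<times> complex)) measure)"
  proof -
    have "(\<lambda>p. bergman_kernel (fst p) (snd p)) \<in> borel_measurable (borel :: ((complex \<times> complex) \<times> (complex \<times> complex)) measure)"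
      using kernel_meas by (simp add: case_prod_unfold)
    moreover have "(\<lambda>p::(complex \<times> complex) \<times> (complex \<times> complex). snd p) \<in> borel \<rightarrow>\<^sub>M borel"
      by (intro borel_measurable_continuous_onI continuous_intros)
    ultimately show ?thesis by measurable
  qed
  have "(\<lambda>z. LINT w|lborel. indicator hartogs w *\<^sub>R (bergman_kernel z w * fJ J w)) \<in> borel_measurable lborel"
  proof (rule lborel.borel_measurable_lebesgue_integral)
    show "case_prod (\<lambda>z w. indicator hartogs w *\<^sub>R (bergman_kernel z w * fJ J w)) \<in> borel_measurable (lborel \<Otimes>\<^sub>M lborel)"
      unfolding lborel_prod using m by (simp add: case_prod_unfold)
  qed
  thus ?thesis unfolding proj_eq .
qed

lemma level_meas: "{z \<in> hartogs. t < norm (bergman_proj (fJ J) z)} \<in> sets lebesgue"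
proof -
  have "{z \<in> hartogs. t < norm (bergman_proj (fJ J) z)} \<in> sets lborel"
    using proj_meas[of J] by measurable
  thus ?thesis by simp
qed

lemma fJ_setmeas: "set_borel_measurable lebesgue hartogs (fJ J)"
  unfolding set_borel_measurable_def by (intro measurable_completion) measurable

lemma fJ_setint: "z \<in> hartogs \<Longrightarrow> set_integrable lebesgue hartogs (\<lambda>w. bergman_kernel z w * fJ J w)"
  unfolding set_integrable_def
proof (subst integrable_completion)
  show "(\<lambda>w. indicator hartogs w *\<^sub>R (bergman_kernel z w * fJ J w)) \<in> borel_measurable lborel" by measurable
  assume z: "z \<in> hartogs"
  show "integrable lborel (\<lambda>w. indicator hartogs w *\<^sub>R (bergman_kernel z w * fJ J w))"
    unfolding integrand_eq using gterm_int[OF z] by (intro Bochner_Integration.integrable_sum) auto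
qed

definition Uset :: "(complex \<times> complex) set" where "Uset = ball 0 (1/100) \<times> ball (1/2) (1/100)"

lemma emeasure_Uset: "emeasure lebesgue Uset = ennreal (pi^2 / 10^8)"
proof -
  have "emeasure lborel Uset = ennreal (pi * (1/100)^2) * ennreal (pi * (1/100)^2)"
    unfolding Uset_def by (subst emeasure_Times_c) (auto simp: emeasure_ball_c)
  also have "\<dots> = ennreal (pi^2 / 10^8)" by (subst ennreal_mult[symmetric]) (auto simp: power2_eq_square)
  finally have e: "emeasure lborel Uset = ennreal (pi^2 / 10^8)" .
  have "open Uset" by (simp add: Uset_def open_Times)
  hence "Uset \<in> sets lborel" by simp
  thus ?thesis using e by (subst emeasure_completion) auto
qed

lemma Uset_level:
  assumes J: "J \<ge> 1"
  shows "Uset \<subseteq> {z \<in> hartogs. harm J / 2 < norm (bergman_proj (fJ J) z)}"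
proof
  fix z assume "z \<in> Uset"
  hence z1: "norm (fst z) < 1/100" and z2: "norm (snd z - 1/2) < 1/100"
    by (auto simp: Uset_def dist_norm norm_minus_commute mem_Times_iff)
  have hp: "harm J > (0::real)" using J by simp
  have "(harm J::real) / 2 < 4/3 * harm J" using hp by simp
  also have "\<dots> \<le> Re (bergman_proj (fJ J) z)" unfolding proj_eq by (rule Re_integral_lower[OF z1 z2])
  also have "\<dots> \<le> norm (bergman_proj (fJ J) z)" by (rule complex_Re_le_cmod)
  finally show "z \<in> {z \<in> hartogs. harm J / 2 < norm (bergman_proj (fJ J) z)}"
    using U_hartogs[OF z1 z2] by simp
qed


lemma ennreal_bound_aux:
  assumes "W \<le> ennreal B" "C \<ge> 0" "T > 0" "B \<ge> 0"
  shows "ennreal C * W / ennreal T \<le> ennreal (C * B / T)"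
proof -
  have "ennreal C * W \<le> ennreal C * ennreal B" using assms(1) by (rule mult_left_mono) simp
  also have "\<dots> = ennreal (C * B)" using assms by (simp add: ennreal_mult)
  finally have "ennreal C * W / ennreal T \<le> ennreal (C * B) / ennreal T" by (rule divide_right_mono_ennreal)
  also have "\<dots> = ennreal (C * B / T)" using assms by (simp add: divide_ennreal)
  finally show ?thesis .
qed

theorem mainTheorem11:
  shows "\<not> (\<exists>C::real. C > 0 \<and>
    (\<forall>f :: complex \<times> complex \<Rightarrow> complex.
       set_borel_measurable lebesgue hartogs f \<longrightarrow>
       wLp_pow (4/3) hweight f < \<infinity> \<longrightarrow>
       (\<forall>z\<in>hartogs. set_integrable lebesgue hartogs (\<lambda>w. bergman_kernel z w * f w)) \<longrightarrow>
       (\<forall>t::real. t > 0 \<longrightarrow>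
          emeasure lebesgue {z \<in> hartogs. norm (bergman_proj f z) > t}
            \<le> ennreal C * wLp_pow (4/3) hweight f / ennreal (t powr (4/3)))))"
proof
  assume "\<exists>C::real. C > 0 \<and>
    (\<forall>f :: complex \<times> complex \<Rightarrow> complex.
       set_borel_measurable lebesgue hartogs f \<longrightarrow>
       wLp_pow (4/3) hweight f < \<infinity> \<longrightarrow>
       (\<forall>z\<in>hartogs. set_integrable lebesgue hartogs (\<lambda>w. bergman_kernel z w * f w)) \<longrightarrow>
       (\<forall>t::real. t > 0 \<longrightarrow>
          emeasure lebesgue {z \<in> hartogs. norm (bergman_proj f z) > t}
            \<le> ennreal C * wLp_pow (4/3) hweight f / ennreal (t powr (4/3))))"
  then obtain C :: real where C: "C > 0" and H: "\<And>f t. set_borel_measurable lebesgue hartogs f \<Longrightarrow>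
       wLp_pow (4/3) hweight f < \<infinity> \<Longrightarrow>
       (\<forall>z\<in>hartogs. set_integrable lebesgue hartogs (\<lambda>w. bergman_kernel z w * f w)) \<Longrightarrow> t > 0 \<Longrightarrow>
          emeasure lebesgue {z \<in> hartogs. norm (bergman_proj f z) > t}
            \<le> ennreal C * wLp_pow (4/3) hweight f / ennreal (t powr (4/3))" by blast
  define K where "K = 36 * 10^8 * C"
  have K0: "K > 0" using C by (simp add: K_def)
  have "\<forall>Z. eventually (\<lambda>n. Z \<le> (harm n :: real)) sequentially"
    using harm_at_top by (simp add: filterlim_at_top)
  then obtain N where N: "\<And>n. n \<ge> N \<Longrightarrow> 2 * (K^3 + 1) \<le> (harm n :: real)"
    unfolding eventually_sequentially by blast
  define J where "J = max N 1"
  have J1: "J \<ge> 1" by (simp add: J_def)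
  have HJ: "2 * (K^3 + 1) \<le> (harm J :: real)" using N[of J] by (simp add: J_def)
  define t where "t = (harm J :: real) / 2"
  have tK: "t > K^3" using HJ by (simp add: t_def)
  have t0: "t > 0" using tK K0 by (smt (verit) zero_less_power)
  have "emeasure lebesgue Uset \<le> emeasure lebesgue {z \<in> hartogs. norm (bergman_proj (fJ J) z) > t}"
    using Uset_level[OF J1] level_meas[of t J] unfolding t_def by (intro emeasure_mono) auto
  also have "\<dots> \<le> ennreal C * wLp_pow (4/3) hweight (fJ J) / ennreal (t powr (4/3))"
  proof (rule H[OF fJ_setmeas _ _ t0])
    show "wLp_pow (4/3) hweight (fJ J) < \<infinity>"
      using norm_bound[of J] by (simp add: le_less_trans)
    show "\<forall>z\<in>hartogs. set_integrable lebesgue hartogs (\<lambda>w. bergman_kernel z w * fJ J w)"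
      using fJ_setint by blast
  qed
  also have "\<dots> \<le> ennreal (C * (18 * pi^2 * harm J) / t powr (4/3))"
    using norm_bound[of J] C t0 harm_nonneg[of J] by (intro ennreal_bound_aux) (auto intro: mult_nonneg_nonneg)
  finally have "ennreal (pi^2 / 10^8) \<le> ennreal (C * (18 * pi^2 * harm J) / t powr (4/3))"
    unfolding emeasure_Uset .
  hence ineq: "pi^2 / 10^8 \<le> C * (18 * pi^2 * harm J) / t powr (4/3)"
  proof -
    have "0 \<le> C * (18 * pi^2 * harm J) / t powr (4/3)"
      using C harm_nonneg[of J] by (intro divide_nonneg_nonneg mult_nonneg_nonneg) auto
    thus ?thesis using \<open>ennreal (pi^2 / 10^8) \<le> _\<close> by (subst (asm) ennreal_le_iff) auto
  qed
  have hJ: "harm J = 2 * t" by (simp add: t_def)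
  have tp: "t powr (4/3) = t * t powr (1/3)" using powr43 t0 by simp
  have tp0: "t powr (1/3) > 0" using t0 by simp
  have "C * (18 * pi^2 * harm J) / t powr (4/3) = pi^2 * (36 * C / t powr (1/3))"
    unfolding hJ tp using t0 by (simp add: field_simps)
  with ineq have "pi^2 * (1 / 10^8) \<le> pi^2 * (36 * C / t powr (1/3))" by simp
  moreover have pp: "pi^2 > (0::real)" by simp
  ultimately have "1 / 10^8 \<le> 36 * C / t powr (1/3)" by (meson mult_le_cancel_left_pos)
  hence "t powr (1/3) \<le> K" using tp0 by (simp add: K_def field_simps)
  moreover have "K < t powr (1/3)"
  proof -
    have "K = (K^3) powr (1/3)" using K0 by (simp add: cube_root_powr)
    also have "\<dots> < t powr (1/3)" using tK K0 by (intro powr_less_mono2) auto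
    finally show ?thesis .
  qed
  ultimately show False by simp
qed


end
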